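(* Let $T$ be a continuous linear operator on a real or complex separable infinite-dimensional F-space $X$ and $\mathcal{F}$ a Furstenberg family. If there is an $\mathcal{F}$-recurrent vector $x$ for $T$ such that $\mathcal{C}_T(x)=\{Sx:S\in\mathcal{C}_T\}$ is dense in $X$, then for every $N\in\mathbb{N}$ the set $\mathcal{F}\mathrm{Rec}(T_{(N)})$ contains a dense infinite-dimensional vector subspace of $X^N$. In particular this holds whenever $T$ has a vector that is both $\mathcal{F}$-recurrent and cyclic, or $T$ has an $\mathcal{F}$-hypercyclic vector.
   Context: A Furstenberg family is a collection $\mathcal{F}$ of infinite subsets of $\mathbb{N}_0$, closed under supersets, with $A\cap[n,\infty)\in\mathcal{F}$ whenever $A\in\mathcal{F}$, $n\in\mathbb{N}$. $x$ is $\mathcal{F}$-recurrent if $\{n\geq0:T^nx\in U\}\in\mathcal{F}$ for every neighbourhood $U$ of $x$, and $\mathcal{F}$-hypercyclic if $\{n\geq0:T^nx\in U\}\in\mathcal{F}$ for every non-empty open $U\subset X$; $\mathcal{F}\mathrm{Rec}(\cdot)$ denotes the set of $\mathcal{F}$-recurrent vectors. $\mathcal{C}_T=\{S:X\to X \text{ continuous}:ST=TS\}$. $x$ is cyclic if $\mathrm{span}\{T^nx:n\geq0\}$ is dense. $T_{(N)}=T\oplus\cdots\oplus T$ on $X^N$. *)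

theory Defs
  imports "HOL-Analysis.Analysis"
begin

text \<open>An F-space over 'k: a vector space (w.r.t. scalar multiplication sc) whose topology is induced
 by a complete, translation-invariant metric (the type-class metric of 'a), with continuous
 addition and jointly continuous scalar multiplication.\<close>

definition F_space :: "('k::real_normed_field \<Rightarrow> 'a::{ab_group_add,complete_space} \<Rightarrow> 'a) \<Rightarrow> bool" where
  "F_space sc \<longleftrightarrow> vector_space sc
     \<and> (\<forall>x y z::'a. dist (x + z) (y + z) = dist x y)
     \<and> continuous_on UNIV (\<lambda>p::'a \<times> 'a. fst p + snd p)
     \<and> continuous_on UNIV (\<lambda>p::'k \<times> 'a. sc (fst p) (snd p))"

definition separable_space :: "'a::topological_space itself \<Rightarrow> bool" where
  "separable_space _ \<longleftrightarrow> (\<exists>D::'a set. countable D \<and> closure D = UNIV)"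

definition infinite_dimensional :: "('k::field \<Rightarrow> 'a::ab_group_add \<Rightarrow> 'a) \<Rightarrow> 'a set \<Rightarrow> bool" where
  "infinite_dimensional sc V \<longleftrightarrow> (\<exists>B \<subseteq> V. infinite B \<and> \<not> module.dependent sc B)"

definition furstenberg_family :: "nat set set \<Rightarrow> bool" where
  "furstenberg_family Fam \<longleftrightarrow>
     (\<forall>A\<in>Fam. infinite A)
   \<and> (\<forall>A B. A \<in> Fam \<and> A \<subseteq> B \<longrightarrow> B \<in> Fam)
   \<and> (\<forall>A\<in>Fam. \<forall>n::nat. n \<ge> 1 \<longrightarrow> A \<inter> {n..} \<in> Fam)"

definition F_recurrent :: "nat set set \<Rightarrow> ('a::topological_space \<Rightarrow> 'a) \<Rightarrow> 'a \<Rightarrow> bool" where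
  "F_recurrent Fam T x \<longleftrightarrow> (\<forall>U. open U \<and> x \<in> U \<longrightarrow> {n. (T ^^ n) x \<in> U} \<in> Fam)"

definition F_Rec :: "nat set set \<Rightarrow> ('a::topological_space \<Rightarrow> 'a) \<Rightarrow> 'a set" where
  "F_Rec Fam T = {x. F_recurrent Fam T x}"

definition F_hypercyclic :: "nat set set \<Rightarrow> ('a::topological_space \<Rightarrow> 'a) \<Rightarrow> 'a \<Rightarrow> bool" where
  "F_hypercyclic Fam T x \<longleftrightarrow> (\<forall>U. open U \<and> U \<noteq> {} \<longrightarrow> {n. (T ^^ n) x \<in> U} \<in> Fam)"

text \<open>The commutant C_T: continuous (not necessarily linear) maps commuting with T.\<close>
definition commutant :: "('a::topological_space \<Rightarrow> 'a) \<Rightarrow> ('a \<Rightarrow> 'a) set" where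
  "commutant T = {S. continuous_on UNIV S \<and> S \<circ> T = T \<circ> S}"

definition commutant_orbit :: "('a::topological_space \<Rightarrow> 'a) \<Rightarrow> 'a \<Rightarrow> 'a set" where
  "commutant_orbit T x = {S x | S. S \<in> commutant T}"

definition cyclic_vector :: "('k::field \<Rightarrow> 'a::{ab_group_add,topological_space} \<Rightarrow> 'a) \<Rightarrow> ('a \<Rightarrow> 'a) \<Rightarrow> 'a \<Rightarrow> bool" where
  "cyclic_vector sc T x \<longleftrightarrow> closure (module.span sc (range (\<lambda>n. (T ^^ n) x))) = UNIV"

text \<open>X^N is modelled as the type 'a^'n ('n a finite type with N elements), with product topology
 and coordinatewise operations.\<close>
definition vec_scale :: "('k \<Rightarrow> 'a \<Rightarrow> 'a) \<Rightarrow> 'k \<Rightarrow> 'a ^ 'n::finite \<Rightarrow> 'a ^ 'n" where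
  "vec_scale sc c v = (\<chi> i. sc c (v $ i))"

definition direct_sum_op :: "('a \<Rightarrow> 'a) \<Rightarrow> 'a ^ 'n::finite \<Rightarrow> 'a ^ 'n" where
  "direct_sum_op T v = (\<chi> i. T (v $ i))"

definition operator_hyp :: "('k::real_normed_field \<Rightarrow> 'a::{ab_group_add,complete_space} \<Rightarrow> 'a) \<Rightarrow> ('a \<Rightarrow> 'a) \<Rightarrow> bool" where
  "operator_hyp sc T \<longleftrightarrow> F_space sc \<and> separable_space TYPE('a) \<and> infinite_dimensional sc (UNIV::'a set)
     \<and> Vector_Spaces.linear sc sc T \<and> continuous_on UNIV T"

definition recurrence_hyp :: "('k::real_normed_field \<Rightarrow> 'a::{ab_group_add,complete_space} \<Rightarrow> 'a) \<Rightarrow> ('a \<Rightarrow> 'a) \<Rightarrow> nat set set \<Rightarrow> bool" where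
  "recurrence_hyp sc T Fam \<longleftrightarrow>
      (\<exists>x. F_recurrent Fam T x \<and> closure (commutant_orbit T x) = UNIV)
    \<or> (\<exists>x. F_recurrent Fam T x \<and> cyclic_vector sc T x)
    \<or> (\<exists>x. F_hypercyclic Fam T x)"

definition subspace_conclusion :: "('k::real_normed_field \<Rightarrow> 'a::{ab_group_add,complete_space} \<Rightarrow> 'a) \<Rightarrow> ('a \<Rightarrow> 'a) \<Rightarrow> nat set set \<Rightarrow> 'n::finite itself \<Rightarrow> bool" where
  "subspace_conclusion sc T Fam _ \<longleftrightarrow>
     (\<exists>V::('a ^ 'n) set. module.subspace (vec_scale sc) V \<and> closure V = UNIV
        \<and> infinite_dimensional (vec_scale sc) V \<and> V \<subseteq> F_Rec Fam (direct_sum_op T))"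

end

theory Submission
  imports Defs
begin

lemma Fs_vs: "F_space sc \<Longrightarrow> vector_space sc" by (simp add: F_space_def)

lemma Fs_add_tendsto:
  fixes sc :: "'k::real_normed_field \<Rightarrow> 'a::{ab_group_add,complete_space} \<Rightarrow> 'a" and f g :: "'c \<Rightarrow> 'a"
  assumes "F_space sc" "(f \<longlongrightarrow> a) F" "(g \<longlongrightarrow> b) F"
  shows "((\<lambda>x. f x + g x) \<longlongrightarrow> a + b) F"
proof -
  have c: "continuous_on UNIV (\<lambda>p::'a \<times> 'a. fst p + snd p)"
    using assms(1) by (simp add: F_space_def)
  have "((\<lambda>x. (\<lambda>p::'a \<times> 'a. fst p + snd p) (f x, g x)) \<longlongrightarrow> (\<lambda>p::'a \<times> 'a. fst p + snd p) (a, b)) F"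
    by (rule continuous_on_tendsto_compose[OF c]) (auto intro: tendsto_Pair assms)
  then show ?thesis by simp
qed

lemma Fs_scale_tendsto:
  fixes sc :: "'k::real_normed_field \<Rightarrow> 'a::{ab_group_add,complete_space} \<Rightarrow> 'a"
  assumes "F_space sc" "(f \<longlongrightarrow> a) F" "(g \<longlongrightarrow> b) F"
  shows "((\<lambda>x. sc (f x) (g x)) \<longlongrightarrow> sc a b) F"
proof -
  have c: "continuous_on UNIV (\<lambda>p::'k \<times> 'a. sc (fst p) (snd p))"
    using assms(1) by (simp add: F_space_def)
  have "((\<lambda>x. (\<lambda>p::'k \<times> 'a. sc (fst p) (snd p)) (f x, g x)) \<longlongrightarrow> (\<lambda>p::'k \<times> 'a. sc (fst p) (snd p)) (a, b)) F"
    by (rule continuous_on_tendsto_compose[OF c]) (auto intro: tendsto_Pair assms)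
  then show ?thesis by simp
qed

lemma Fs_diff_tendsto:
  fixes sc :: "'k::real_normed_field \<Rightarrow> 'a::{ab_group_add,complete_space} \<Rightarrow> 'a" and f g :: "'c \<Rightarrow> 'a"
  assumes "F_space sc" "(f \<longlongrightarrow> a) F" "(g \<longlongrightarrow> b) F"
  shows "((\<lambda>x. f x - g x) \<longlongrightarrow> a - b) F"
proof -
  interpret vector_space sc using Fs_vs[OF assms(1)] .
  have m: "\<And>y. sc (-1) y = - y" by (metis scale_minus_left scale_one)
  have "((\<lambda>x. f x + sc (-1) (g x)) \<longlongrightarrow> a + sc (-1) b) F"
    by (intro Fs_add_tendsto[OF assms(1) assms(2)] Fs_scale_tendsto[OF assms(1)] tendsto_const assms(3))
  then show ?thesis by (simp add: m)
qed

lemma Fs_add_cont: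
  fixes sc :: "'k::real_normed_field \<Rightarrow> 'a::{ab_group_add,complete_space} \<Rightarrow> 'a" and f g :: "'c::topological_space \<Rightarrow> 'a"
  assumes "F_space sc" "continuous_on UNIV f" "continuous_on UNIV g"
  shows "continuous_on UNIV (\<lambda>x. f x + g x)"
  using assms unfolding continuous_on_def by (auto intro: Fs_add_tendsto)

lemma Fs_scale_cont:
  fixes sc :: "'k::real_normed_field \<Rightarrow> 'a::{ab_group_add,complete_space} \<Rightarrow> 'a"
  assumes "F_space sc" "continuous_on UNIV f"
  shows "continuous_on UNIV (\<lambda>x. sc c (f x))"
  using assms unfolding continuous_on_def by (auto intro: Fs_scale_tendsto tendsto_const)

lemma span_step:
  fixes sc :: "'k::{real_normed_field,heine_borel} \<Rightarrow> 'a::{ab_group_add,complete_space} \<Rightarrow> 'a"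
  assumes Fs: "F_space sc" and cl: "closed (module.span sc B)"
  shows "closed (module.span sc (insert b B))"
proof -
  interpret vector_space sc using Fs_vs[OF Fs] .
  show ?thesis
  proof (cases "b \<in> span B")
    case True
    then show ?thesis using cl span_redundant by simp
  next
    case nb: False
    show ?thesis unfolding closed_sequential_limits
    proof (intro allI impI, elim conjE)
      fix y l assume ys: "\<forall>n. y n \<in> span (insert b B)" and yl: "y \<longlonglongrightarrow> l"
      have "\<forall>n. \<exists>k. y n - sc k b \<in> span B" using ys span_insert by blast
      then obtain c where c: "\<And>n. y n - sc (c n) b \<in> span B" by metis
      define g where "g n = scaleR (1/(1+norm(c n))) (c n)" for n
      have ng: "norm (g n) = norm (c n) / (1 + norm (c n))" for n
        by (simp add: g_def)
      have ng1: "norm (g n) < 1" for n unfolding ng by (simp add: divide_less_eq add_pos_nonneg)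
      have cg: "c n = scaleR (1/(1 - norm (g n))) (g n)" for n
      proof -
        have p: "1 + norm (c n) > 0" by (simp add: add_pos_nonneg)
        have "1 - norm (g n) = 1 / (1 + norm (c n))" unfolding ng
          using p by (simp add: field_simps)
        then show ?thesis using p by (simp add: g_def)
      qed
      have ic: "norm (inverse (c n)) = (1 - norm (g n)) / norm (g n)" for n
      proof (cases "c n = 0")
        case True then show ?thesis by (simp add: g_def)
      next
        case False
        then have a: "norm (c n) > 0" by simp
        have e: "(1 - a/(1+a)) / (a/(1+a)) = 1 / a" if "a > 0" for a :: real
        proof -
          have "1 + a > 0" using that by simp
          then show ?thesis using that by (simp add: field_simps)
        qed
        have "(1 - norm (c n)/(1+norm (c n))) / (norm (c n)/(1+norm (c n))) = 1 / norm (c n)"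
          using e[OF a] .
        then show ?thesis unfolding ng by (simp add: norm_inverse divide_inverse)
      qed
      have "bounded (range g)" using ng1 by (metis boundedI less_imp_le rangeE)
      then obtain gl r where r: "strict_mono r" and gr: "(g \<circ> r) \<longlonglongrightarrow> gl"
        using bounded_imp_convergent_subsequence by blast
      have yr: "(y \<circ> r) \<longlonglongrightarrow> l" using LIMSEQ_subseq_LIMSEQ[OF yl r] .
      have ngr: "(\<lambda>n. norm (g (r n))) \<longlonglongrightarrow> norm gl" using tendsto_norm[OF gr] by (simp add: o_def)
      have "norm gl \<le> 1" using ngr ng1 by (meson LIMSEQ_le_const2 less_imp_le)
      then consider "norm gl < 1" | "norm gl = 1" by linarith
      then show "l \<in> span (insert b B)"
      proof cases
        case 1
        define k where "k = scaleR (1/(1 - norm gl)) gl"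
        have "(\<lambda>n. scaleR (1/(1 - norm (g (r n)))) (g (r n))) \<longlonglongrightarrow> k"
          unfolding k_def using 1 gr ngr
          by (intro tendsto_intros) (auto simp: o_def)
        then have cr: "(\<lambda>n. c (r n)) \<longlonglongrightarrow> k" using cg by simp
        have lim: "(\<lambda>n. y (r n) - sc (c (r n)) b) \<longlonglongrightarrow> l - sc k b"
          using yr cr by (intro Fs_diff_tendsto[OF Fs] Fs_scale_tendsto[OF Fs] tendsto_const) (auto simp: o_def)
        have mem: "\<And>n. y (r n) - sc (c (r n)) b \<in> span B" using c by blast
        have "l - sc k b \<in> span B"
          by (rule closed_sequentially[OF cl mem lim])
        then show ?thesis using span_insert by blast
      next
        case 2
        have "(\<lambda>n. (1 - norm (g (r n))) / norm (g (r n))) \<longlonglongrightarrow> (1 - 1) / 1"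
          using ngr 2 by (intro tendsto_intros) auto
        then have "(\<lambda>n. norm (inverse (c (r n)))) \<longlonglongrightarrow> 0" using ic by simp
        then have icr: "(\<lambda>n. inverse (c (r n))) \<longlonglongrightarrow> 0" using tendsto_norm_zero_iff by blast
        have ev: "eventually (\<lambda>n. norm (g (r n)) > 1/2) sequentially"
          using order_tendstoD(1)[OF ngr, of "1/2"] 2 by simp
        have ev2: "eventually (\<lambda>n. sc (inverse (c (r n))) (y (r n)) - b
             = sc (inverse (c (r n))) (y (r n) - sc (c (r n)) b)) sequentially"
        proof (rule eventually_mono[OF ev])
          fix n assume "norm (g (r n)) > 1/2"
          then have "c (r n) \<noteq> 0" by (auto simp: g_def)
          then show "sc (inverse (c (r n))) (y (r n)) - b
             = sc (inverse (c (r n))) (y (r n) - sc (c (r n)) b)"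
            by (simp add: scale_right_diff_distrib)
        qed
        have "(\<lambda>n. sc (inverse (c (r n))) (y (r n)) - b) \<longlonglongrightarrow> sc 0 l - b"
          using yr icr by (intro Fs_diff_tendsto[OF Fs] Fs_scale_tendsto[OF Fs] tendsto_const) (auto simp: o_def)
        then have lim2: "(\<lambda>n. sc (inverse (c (r n))) (y (r n) - sc (c (r n)) b)) \<longlonglongrightarrow> - b"
          using tendsto_cong[OF ev2] by simp
        have mem2: "\<And>n. sc (inverse (c (r n))) (y (r n) - sc (c (r n)) b) \<in> span B"
          using c span_scale by blast
        have "- b \<in> span B" by (rule closed_sequentially[OF cl mem2 lim2])
        then have "b \<in> span B" using span_neg by fastforce
        then show ?thesis using nb by simp
      qed
    qed
  qed
qed

lemma span_finite_closed:
  fixes sc :: "'k::{real_normed_field,heine_borel} \<Rightarrow> 'a::{ab_group_add,complete_space} \<Rightarrow> 'a"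
  assumes Fs: "F_space sc" and "finite B"
  shows "closed (module.span sc B)"
  using assms(2)
proof (induction B rule: finite_induct)
  case empty
  interpret vector_space sc using Fs_vs[OF Fs] .
  show ?case by simp
next
  case (insert x F)
  then show ?case using span_step[OF Fs] by blast
qed


lemma dense_subspace_infdim:
  fixes sc :: "'k::{real_normed_field,heine_borel} \<Rightarrow> 'a::{ab_group_add,complete_space} \<Rightarrow> 'a"
  assumes Fs: "F_space sc" and inf: "infinite_dimensional sc (UNIV::'a set)"
    and sub: "module.subspace sc C" and dense: "closure C = UNIV"
  shows "\<exists>B\<subseteq>C. infinite B \<and> \<not> module.dependent sc B"
proof -
  interpret vector_space sc using Fs_vs[OF Fs] .
  obtain B where B: "B \<subseteq> C" "independent B" "C \<subseteq> span B"
    using maximal_independent_subset by blast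
  have "infinite B"
  proof
    assume fB: "finite B"
    have "closed (span B)" using span_finite_closed[OF Fs fB] .
    then have "closure C \<subseteq> span B" using B(3) by (rule closure_minimal[rotated])
    then have U: "span B = UNIV" using dense by blast
    obtain B0 where "infinite B0" "independent B0"
      using inf unfolding infinite_dimensional_def by blast
    moreover have "B0 \<subseteq> span B" using U by simp
    ultimately show False using independent_span_bound[OF fB, of B0] by simp
  qed
  then show ?thesis using B by blast
qed

lemma vec_vs:
  fixes sc :: "'k::field \<Rightarrow> 'a::ab_group_add \<Rightarrow> 'a"
  assumes vs: "vector_space sc"
  shows "vector_space (vec_scale sc :: 'k \<Rightarrow> 'a ^ 'n::finite \<Rightarrow> 'a ^ 'n)"
proof -
  interpret vector_space sc using vs .
  show ?thesis
    by unfold_locales (simp_all add: vec_eq_iff vec_scale_def scale_right_distrib scale_left_distrib)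
qed

lemma diag_indep:
  fixes sc :: "'k::field \<Rightarrow> 'a::ab_group_add \<Rightarrow> 'a"
  assumes vs: "vector_space sc" and ind: "\<not> module.dependent sc B"
  shows "\<not> module.dependent (vec_scale sc) ((\<lambda>b. (\<chi> i. b) :: 'a ^ 'n::finite) ` B)"
proof
  let ?d = "\<lambda>b. (\<chi> i. b) :: 'a ^ 'n"
  assume "module.dependent (vec_scale sc) (?d ` B)"
  then have "\<exists>t u. finite t \<and> t \<subseteq> ?d ` B \<and> (\<Sum>v\<in>t. vec_scale sc (u v) v) = 0 \<and> (\<exists>v\<in>t. u v \<noteq> 0)"
    unfolding module.dependent_explicit[OF module_iff_vector_space[THEN iffD2, OF vec_vs[OF vs]]] .
  then obtain t u v0 where t: "finite t" "t \<subseteq> ?d ` B" "(\<Sum>v\<in>t. vec_scale sc (u v) v) = 0"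
      and v0: "v0 \<in> t" "u v0 \<noteq> 0"
    by blast
  define t0 where "t0 = B \<inter> ?d -` t"
  have inj: "inj ?d" by (rule injI) (metis vec_lambda_beta)
  have tt0: "t = ?d ` t0" using t(2) unfolding t0_def by blast
  have ft0: "finite t0" using t(1) tt0 inj by (metis finite_imageD inj_on_subset subset_UNIV)
  have "(\<Sum>b\<in>t0. sc (u (?d b)) b) = (\<Sum>v\<in>t. vec_scale sc (u v) v) $ undefined"
    unfolding tt0 sum_component sum.reindex[OF inj_on_subset[OF inj subset_UNIV]]
    by (simp add: vec_scale_def)
  then have s0: "(\<Sum>b\<in>t0. sc (u (?d b)) b) = 0" using t(3) by simp
  obtain b0 where "b0 \<in> t0" "v0 = ?d b0" using v0(1) tt0 by blast
  then have "\<exists>v\<in>t0. (u \<circ> ?d) v \<noteq> 0" using v0(2) by auto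
  then have "module.dependent sc B"
    unfolding module.dependent_explicit[OF module_iff_vector_space[THEN iffD2, OF vs]] using ft0 s0 unfolding t0_def
    by (intro exI[of _ t0] exI[of _ "u \<circ> ?d"]) (auto simp: t0_def)
  then show False using ind by simp
qed


lemma funpow_commute:
  assumes "\<And>y. \<Phi> (T y) = R (\<Phi> y)"
  shows "(R ^^ n) (\<Phi> y) = \<Phi> ((T ^^ n) y)"
  by (induction n) (simp_all add: assms)

lemma rec_transfer:
  fixes \<Phi> :: "'a::topological_space \<Rightarrow> 'b::topological_space"
  assumes sup: "\<forall>A B. A \<in> Fam \<and> A \<subseteq> B \<longrightarrow> B \<in> Fam"
    and rec: "F_recurrent Fam T x" and cont: "continuous_on UNIV \<Phi>"
    and comm: "\<And>y. \<Phi> (T y) = R (\<Phi> y)"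
  shows "F_recurrent Fam R (\<Phi> x)"
  unfolding F_recurrent_def
proof (intro allI impI, elim conjE)
  fix U assume U: "open U" "\<Phi> x \<in> U"
  have "open (\<Phi> -` U)" using cont U(1) continuous_on_open_vimage[of UNIV \<Phi>] by simp
  then have A: "{n. (T ^^ n) x \<in> \<Phi> -` U} \<in> Fam" using rec U(2) unfolding F_recurrent_def by blast
  have "{n. (T ^^ n) x \<in> \<Phi> -` U} \<subseteq> {n. (R ^^ n) (\<Phi> x) \<in> U}"
    using funpow_commute[of \<Phi> T R, OF comm] by auto
  then show "{n. (R ^^ n) (\<Phi> x) \<in> U} \<in> Fam" using sup A by blast
qed

lemma commutant_subspace:
  fixes sc :: "'k::{real_normed_field} \<Rightarrow> 'a::{ab_group_add,complete_space} \<Rightarrow> 'a"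
  assumes Fs: "F_space sc" and lin: "Vector_Spaces.linear sc sc T"
  shows "module.subspace sc (commutant_orbit T x)"
proof -
  interpret vector_space sc using Fs_vs[OF Fs] .
  have h: "module_hom sc sc T" using lin linear_iff_module_hom by blast
  have T0: "T 0 = 0" using module_hom.zero[OF h] .
  have Tadd: "T (a + b) = T a + T b" for a b using module_hom.add[OF h] .
  have Tsc: "T (sc c a) = sc c (T a)" for c a using module_hom.scale[OF h] .
  show ?thesis unfolding subspace_def
  proof (intro conjI ballI allI)
    show "0 \<in> commutant_orbit T x"
      unfolding commutant_orbit_def commutant_def
      by (rule CollectI, rule exI[of _ "\<lambda>_. 0"]) (simp add: T0 fun_eq_iff)
  next
    fix a b assume "a \<in> commutant_orbit T x" "b \<in> commutant_orbit T x"
    then obtain S1 S2 where S: "a = S1 x" "b = S2 x" "continuous_on UNIV S1" "S1 \<circ> T = T \<circ> S1"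
      "continuous_on UNIV S2" "S2 \<circ> T = T \<circ> S2"
      unfolding commutant_orbit_def commutant_def by blast
    have "(\<lambda>y. S1 y + S2 y) \<in> commutant T"
      unfolding commutant_def using S Fs_add_cont[OF Fs S(3) S(5)]
      by (auto simp: fun_eq_iff Tadd)
    then show "a + b \<in> commutant_orbit T x"
      unfolding commutant_orbit_def using S by (intro CollectI exI[of _ "\<lambda>y. S1 y + S2 y"]) simp
  next
    fix c a assume "a \<in> commutant_orbit T x"
    then obtain S1 where S: "a = S1 x" "continuous_on UNIV S1" "S1 \<circ> T = T \<circ> S1"
      unfolding commutant_orbit_def commutant_def by blast
    have "(\<lambda>y. sc c (S1 y)) \<in> commutant T"
      unfolding commutant_def using S Fs_scale_cont[OF Fs S(2)]
      by (auto simp: fun_eq_iff Tsc)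
    then show "sc c a \<in> commutant_orbit T x"
      unfolding commutant_orbit_def using S by (intro CollectI exI[of _ "\<lambda>y. sc c (S1 y)"]) simp
  qed
qed

lemma dense_by_open:
  assumes "\<And>U. open U \<Longrightarrow> U \<noteq> {} \<Longrightarrow> U \<inter> S \<noteq> {}"
  shows "closure S = UNIV"
proof (rule ccontr)
  assume "closure S \<noteq> UNIV"
  then have "- closure S \<noteq> {}" by auto
  moreover have "open (- closure S)" by (simp add: open_Compl)
  ultimately have "- closure S \<inter> S \<noteq> {}" using assms by blast
  then show False using closure_subset by blast
qed

lemma funpow_comm:
  assumes "continuous_on UNIV T"
  shows "(T ^^ n) \<in> commutant T"
proof -
  have "continuous_on UNIV (T ^^ n)"
  proof (induction n)
    case 0 then show ?case by (simp add: continuous_on_id)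
  next
    case (Suc n)
    then show ?case using continuous_on_compose[of UNIV "T ^^ n" T] assms
      by (simp add: continuous_on_subset)
  qed
  then show ?thesis unfolding commutant_def by (simp add: funpow_swap1 fun_eq_iff)
qed


lemma main_gen:
  fixes sc :: "'k::{real_normed_field,heine_borel} \<Rightarrow> 'a::{ab_group_add,complete_space} \<Rightarrow> 'a"
  assumes op: "operator_hyp sc T" and ff: "furstenberg_family Fam" and rh: "recurrence_hyp sc T Fam"
  shows "subspace_conclusion sc T Fam TYPE('n::finite)"
proof -
  have Fs: "F_space sc" and inf: "infinite_dimensional sc (UNIV::'a set)"
    and lin: "Vector_Spaces.linear sc sc T" and cT: "continuous_on UNIV T"
    using op unfolding operator_hyp_def by auto
  have sup: "\<forall>A B. A \<in> Fam \<and> A \<subseteq> B \<longrightarrow> B \<in> Fam" and finf: "\<forall>A\<in>Fam. infinite A"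
    using ff unfolding furstenberg_family_def by auto
  interpret vector_space sc using Fs_vs[OF Fs] .
  have orb: "range (\<lambda>n. (T ^^ n) y) \<subseteq> commutant_orbit T y" for y
    unfolding commutant_orbit_def using funpow_comm[OF cT] by blast
  obtain x where rec: "F_recurrent Fam T x" and dense: "closure (commutant_orbit T x) = UNIV"
  proof -
    consider (a) "\<exists>x. F_recurrent Fam T x \<and> closure (commutant_orbit T x) = UNIV"
      | (b) "\<exists>x. F_recurrent Fam T x \<and> cyclic_vector sc T x"
      | (c) "\<exists>x. F_hypercyclic Fam T x"
      using rh unfolding recurrence_hyp_def by blast
    then show ?thesis
    proof cases
      case a then show ?thesis using that by blast
    next
      case b
      then obtain x where x: "F_recurrent Fam T x" "cyclic_vector sc T x" by blast
      have "span (range (\<lambda>n. (T ^^ n) x)) \<subseteq> commutant_orbit T x"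
        by (rule span_minimal[OF orb commutant_subspace[OF Fs lin]])
      then have "closure (span (range (\<lambda>n. (T ^^ n) x))) \<subseteq> closure (commutant_orbit T x)"
        by (rule closure_mono)
      then have "closure (commutant_orbit T x) = UNIV" using x(2) unfolding cyclic_vector_def by blast
      then show ?thesis using that x(1) by blast
    next
      case c
      then obtain x where x: "F_hypercyclic Fam T x" by blast
      have "F_recurrent Fam T x" using x unfolding F_hypercyclic_def F_recurrent_def by blast
      moreover have "closure (range (\<lambda>n. (T ^^ n) x)) = UNIV"
      proof (rule dense_by_open)
        fix U :: "'a set" assume U: "open U" "U \<noteq> {}"
        then have "{n. (T ^^ n) x \<in> U} \<in> Fam" using x unfolding F_hypercyclic_def by blast
        then have "{n. (T ^^ n) x \<in> U} \<noteq> {}" using finf by fastforce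
        then show "U \<inter> range (\<lambda>n. (T ^^ n) x) \<noteq> {}" by blast
      qed
      then have "closure (commutant_orbit T x) = UNIV"
        using closure_mono[OF orb[of x]] by blast
      ultimately show ?thesis using that by blast
    qed
  qed
  define C where "C = commutant_orbit T x"
  have subC: "subspace C" unfolding C_def by (rule commutant_subspace[OF Fs lin])
  obtain B where B: "B \<subseteq> C" "infinite B" "\<not> dependent B"
    using dense_subspace_infdim[OF Fs inf subC] dense unfolding C_def by blast
  define V where "V = {v :: 'a ^ 'n. \<forall>i. v $ i \<in> C}"
  have vvs: "vector_space (vec_scale sc :: 'k \<Rightarrow> 'a ^ 'n \<Rightarrow> 'a ^ 'n)" by (rule vec_vs) unfold_locales
  have C0: "0 \<in> C" and Cadd: "\<And>a b. a \<in> C \<Longrightarrow> b \<in> C \<Longrightarrow> a + b \<in> C"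
    and Csc: "\<And>c a. a \<in> C \<Longrightarrow> sc c a \<in> C"
    using subC unfolding subspace_def by auto
  have subV: "module.subspace (vec_scale sc) V"
    unfolding module.subspace_def[OF module_iff_vector_space[THEN iffD2, OF vvs]] V_def
    using C0 Cadd Csc by (auto simp: vec_scale_def)
  have clV: "closure V = UNIV"
  proof (intro set_eqI iffI UNIV_I)
    fix v :: "'a ^ 'n"
    have "\<forall>i. \<exists>s. (\<forall>n. s n \<in> C) \<and> s \<longlonglongrightarrow> v $ i"
      using dense unfolding C_def[symmetric] using closure_sequential by blast
    then obtain s where s: "\<And>i n. s i n \<in> C" "\<And>i. s i \<longlonglongrightarrow> v $ i" by metis
    have "(\<lambda>n. \<chi> i. s i n) \<longlonglongrightarrow> (\<chi> i. v $ i)"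
      by (rule tendsto_vec_lambda) (use s(2) in auto)
    moreover have "\<forall>n. (\<chi> i. s i n) \<in> V" unfolding V_def using s(1) by simp
    ultimately show "v \<in> closure V" unfolding closure_sequential by (metis vec_nth_inverse)
  qed
  let ?d = "\<lambda>b. (\<chi> i. b) :: 'a ^ 'n"
  have "?d ` B \<subseteq> V" using B(1) unfolding V_def by auto
  moreover have "infinite (?d ` B)"
  proof
    assume "finite (?d ` B)"
    moreover have "inj ?d" by (rule injI) (metis vec_lambda_beta)
    ultimately show False using B(2) by (metis finite_imageD inj_on_subset subset_UNIV)
  qed
  moreover have "\<not> module.dependent (vec_scale sc) (?d ` B)"
    by (rule diag_indep[OF Fs_vs[OF Fs] B(3)])
  ultimately have idV: "infinite_dimensional (vec_scale sc) V"
    unfolding infinite_dimensional_def by blast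
  have recV: "V \<subseteq> F_Rec Fam (direct_sum_op T)"
  proof
    fix v assume "v \<in> V"
    then have "\<forall>i. \<exists>S. S \<in> commutant T \<and> v $ i = S x" unfolding V_def C_def commutant_orbit_def by blast
    then obtain S where S: "\<And>i. S i \<in> commutant T" "\<And>i. v $ i = S i x" by metis
    define \<Phi> where "\<Phi> y = (\<chi> i. S i y)" for y
    have cont: "continuous_on UNIV \<Phi>" unfolding \<Phi>_def
      by (rule continuous_on_vec_lambda) (use S(1) in \<open>auto simp: commutant_def\<close>)
    have comm: "\<Phi> (T y) = direct_sum_op T (\<Phi> y)" for y
    proof -
      have "S i (T y) = T (S i y)" for i using S(1)[of i] unfolding commutant_def by (auto simp: fun_eq_iff)
      then show ?thesis by (simp add: \<Phi>_def direct_sum_op_def)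
    qed
    have "\<Phi> x = v" unfolding \<Phi>_def using S(2) by (simp add: vec_eq_iff)
    then show "v \<in> F_Rec Fam (direct_sum_op T)"
      using rec_transfer[OF sup rec cont comm] unfolding F_Rec_def by simp
  qed
  show ?thesis unfolding subspace_conclusion_def using subV clV idV recV by blast
qed


theorem mainTheorem17:
  shows "(\<forall>(sc :: real \<Rightarrow> 'a::{ab_group_add,complete_space} \<Rightarrow> 'a) T Fam.
            operator_hyp sc T \<and> furstenberg_family Fam \<and> recurrence_hyp sc T Fam
            \<longrightarrow> subspace_conclusion sc T Fam TYPE('n::finite))
       \<and> (\<forall>(sc :: complex \<Rightarrow> 'b::{ab_group_add,complete_space} \<Rightarrow> 'b) T Fam.
            operator_hyp sc T \<and> furstenberg_family Fam \<and> recurrence_hyp sc T Fam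
            \<longrightarrow> subspace_conclusion sc T Fam TYPE('n::finite))"
  using main_gen[where 'k=real and 'a='a and 'n='n] main_gen[where 'k=complex and 'a='b and 'n='n] by blast

end
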